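(* Let $R$ be a principal ideal domain and let $a\in R$ be a nonzero non-unit. Then the left ideal $Ra$ is completely prime if and only if $a$ is c-irreducible.
   Context: A principal ideal domain (PID) is a (not necessarily commutative) domain in which every left ideal and every right ideal is principal. A left ideal $\mathfrak{p}$ is completely prime if $\mathfrak{p}\neq R$ and, for $a,b\in R$, $ab\in\mathfrak{p}$ and $\mathfrak{p}b\subseteq\mathfrak{p}$ imply $a\in\mathfrak{p}$ or $b\in\mathfrak{p}$. Elements $b,c$ are similar if $R/Rb\cong R/Rc$ as left $R$-modules. A nonzero $a$ is c-reducible if $a=bb'=c'c$ for some non-units $b,b',c',c\in R$ with $b$ similar to $c$; an element that is not c-reducible is c-irreducible. *)

theory Defs
  imports Main
begin

text \<open>Ambient ring: type class ring_1_no_zero_divisors = (not necessarily commutative)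
  ring with 1, 0 \<noteq> 1, no zero divisors, i.e. a domain.\<close>

definition left_ideal :: "'a::ring_1 set \<Rightarrow> bool" where
  "left_ideal I \<longleftrightarrow> 0 \<in> I \<and> (\<forall>x\<in>I. \<forall>y\<in>I. x + y \<in> I) \<and> (\<forall>x\<in>I. - x \<in> I)
     \<and> (\<forall>r. \<forall>x\<in>I. r * x \<in> I)"

definition right_ideal :: "'a::ring_1 set \<Rightarrow> bool" where
  "right_ideal I \<longleftrightarrow> 0 \<in> I \<and> (\<forall>x\<in>I. \<forall>y\<in>I. x + y \<in> I) \<and> (\<forall>x\<in>I. - x \<in> I)
     \<and> (\<forall>r. \<forall>x\<in>I. x * r \<in> I)"

definition lprinc :: "'a::ring_1 \<Rightarrow> 'a set" where
  "lprinc a = {r * a | r. True}"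

definition rprinc :: "'a::ring_1 \<Rightarrow> 'a set" where
  "rprinc a = {a * r | r. True}"

definition is_PID :: "'a::ring_1_no_zero_divisors itself \<Rightarrow> bool" where
  "is_PID _ \<longleftrightarrow> (\<forall>I::'a set. left_ideal I \<longrightarrow> (\<exists>g. I = lprinc g))
              \<and> (\<forall>I::'a set. right_ideal I \<longrightarrow> (\<exists>g. I = rprinc g))"

definition ring_unit :: "'a::ring_1 \<Rightarrow> bool" where
  "ring_unit u \<longleftrightarrow> (\<exists>v. u * v = 1 \<and> v * u = 1)"

definition completely_prime :: "'a::ring_1 set \<Rightarrow> bool" where
  "completely_prime P \<longleftrightarrow> P \<noteq> UNIV \<and>
     (\<forall>a b. a * b \<in> P \<and> (\<forall>x\<in>P. x * b \<in> P) \<longrightarrow> a \<in> P \<or> b \<in> P)"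

text \<open>R/Rb \<cong> R/Rc as left R-modules.  Such an isomorphism is the same as a
  surjective left R-module homomorphism f : R \<rightarrow> R/Rc with kernel Rb (first
  isomorphism theorem); f is given on representatives, equalities being taken
  modulo Rc.\<close>
definition similar :: "'a::ring_1 \<Rightarrow> 'a \<Rightarrow> bool" where
  "similar b c \<longleftrightarrow> (\<exists>f :: 'a \<Rightarrow> 'a.
      (\<forall>x y. f (x + y) - (f x + f y) \<in> lprinc c)
    \<and> (\<forall>r x. f (r * x) - r * f x \<in> lprinc c)
    \<and> (\<forall>x. f x \<in> lprinc c \<longleftrightarrow> x \<in> lprinc b)
    \<and> (\<forall>y. \<exists>x. f x - y \<in> lprinc c))"

definition c_reducible :: "'a::ring_1 \<Rightarrow> bool" where
  "c_reducible a \<longleftrightarrow> a \<noteq> 0 \<and> (\<exists>b b' c' c. \<not> ring_unit b \<and> \<not> ring_unit b' \<and>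
      \<not> ring_unit c' \<and> \<not> ring_unit c \<and> a = b * b' \<and> a = c' * c \<and> similar b c)"

definition c_irreducible :: "'a::ring_1 \<Rightarrow> bool" where
  "c_irreducible a \<longleftrightarrow> \<not> c_reducible a"

end

theory Submission
  imports Defs
begin

lemma lp_iff: "x \<in> lprinc a \<longleftrightarrow> (\<exists>r. x = r * a)"
  by (auto simp: lprinc_def)

lemma lp_self: "a \<in> lprinc a"
  unfolding lp_iff by (metis mult_1_left)

lemma lp_add: "x \<in> lprinc a \<Longrightarrow> y \<in> lprinc a \<Longrightarrow> x + y \<in> lprinc a"
  unfolding lp_iff by (metis distrib_right)

lemma lp_diff: "x \<in> lprinc a \<Longrightarrow> y \<in> lprinc a \<Longrightarrow> x - y \<in> lprinc a"
  unfolding lp_iff by (metis left_diff_distrib)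

lemma lp_mult: "x \<in> lprinc a \<Longrightarrow> r * x \<in> lprinc a"
  unfolding lp_iff by (metis mult.assoc)

lemma lp_zero: "0 \<in> lprinc a"
  unfolding lp_iff by (metis mult_zero_left)

lemma lp_shift:
  assumes "x - y \<in> lprinc c" shows "x \<in> lprinc c \<longleftrightarrow> y \<in> lprinc c"
proof
  assume "x \<in> lprinc c" then show "y \<in> lprinc c" using lp_diff[OF _ assms] by fastforce
next
  assume "y \<in> lprinc c" then show "x \<in> lprinc c" using lp_add[OF assms] by fastforce
qed

lemma lp_left_ideal: "left_ideal (lprinc a)"
  unfolding left_ideal_def using lp_zero lp_add lp_mult
  by (metis mult_minus1)

lemma left_inv_unit:
  fixes c r :: "'a::ring_1_no_zero_divisors"
  assumes "r * c = 1" shows "ring_unit c"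
proof -
  have c0: "c \<noteq> 0" using assms by auto
  have "(c * r - 1) * c = 0" using assms
    by (simp add: left_diff_distrib mult.assoc)
  then have "c * r = 1" using c0 by simp
  then show ?thesis unfolding ring_unit_def using assms by blast
qed

lemma one_lp_unit:
  fixes c :: "'a::ring_1_no_zero_divisors"
  assumes "1 \<in> lprinc c" shows "ring_unit c"
  using assms left_inv_unit unfolding lp_iff by metis

lemma unit_lp:
  fixes c :: "'a::ring_1"
  assumes "ring_unit c" shows "x \<in> lprinc c"
proof -
  obtain v where "c * v = 1" "v * c = 1" using assms unfolding ring_unit_def by blast
  then have "x = (x * v) * c" by (simp add: mult.assoc)
  then show ?thesis unfolding lp_iff by blast
qed

lemma dir1:
  fixes a :: "'a::ring_1_no_zero_divisors"
  assumes a0: "a \<noteq> 0" and cp: "completely_prime (lprinc a)"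
  shows "c_irreducible a"
  unfolding c_irreducible_def
proof
  assume "c_reducible a"
  then obtain b b' c' c where nu: "\<not> ring_unit b" "\<not> ring_unit b'" "\<not> ring_unit c'" "\<not> ring_unit c"
    and ab: "a = b * b'" and ac: "a = c' * c" and sim: "similar b c"
    unfolding c_reducible_def by blast
  have b'0: "b' \<noteq> 0" and c0: "c \<noteq> 0" using a0 ab ac by auto
  obtain f where fadd: "\<forall>r x. f (r * x) - r * f x \<in> lprinc c"
    and fker: "\<forall>x. f x \<in> lprinc c \<longleftrightarrow> x \<in> lprinc b"
    and fsurj: "\<forall>y. \<exists>x. f x - y \<in> lprinc c"
    using sim unfolding similar_def by blast
  define u where "u = f 1"
  have hf: "f r - r * u \<in> lprinc c" for r using fadd[rule_format, of r 1] by (simp add: u_def)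
  have ker: "r * u \<in> lprinc c \<longleftrightarrow> r \<in> lprinc b" for r
  proof -
    have "f r \<in> lprinc c \<longleftrightarrow> r * u \<in> lprinc c"
      using lp_shift[OF hf[of r]] .
    then show ?thesis using fker by blast
  qed
  obtain s where "f s - 1 \<in> lprinc c" using fsurj by blast
  moreover have "(f s - 1) - (f s - s * u) = s * u - 1" by simp
  ultimately have su: "s * u - 1 \<in> lprinc c" using hf[of s] lp_diff by metis
  have key: "y * s \<in> lprinc b \<longleftrightarrow> y \<in> lprinc c" for y
  proof -
    have "y * s * u - y = y * (s * u - 1)" by (simp add: right_diff_distrib mult.assoc)
    then have "y * s * u - y \<in> lprinc c" using lp_mult su by metis
    then have "y * s * u \<in> lprinc c \<longleftrightarrow> y \<in> lprinc c" by (rule lp_shift)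
    then show ?thesis using ker[of "y * s"] by simp
  qed
  define z where "z = s * b'"
  have "c * s \<in> lprinc b" using key lp_self by blast
  then obtain r where r: "c * s = r * b" unfolding lp_iff by blast
  have cz: "c * z = r * a" using r ab by (simp add: z_def mult.assoc[symmetric])
  have "a * z = c' * (c * s) * b'" using ac by (simp add: z_def mult.assoc)
  also have "\<dots> = (c' * r) * (b * b')" using r by (simp add: mult.assoc)
  finally have az: "a * z = (c' * r) * a" using ab by simp
  have idl: "\<forall>x\<in>lprinc a. x * z \<in> lprinc a"
  proof
    fix x assume "x \<in> lprinc a"
    then obtain t where "x = t * a" unfolding lp_iff by blast
    then have "x * z = (t * c' * r) * a" using az by (simp add: mult.assoc)
    then show "x * z \<in> lprinc a" unfolding lp_iff by blast
  qed
  have "c * z \<in> lprinc a" using cz unfolding lp_iff by blast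
  then have "c \<in> lprinc a \<or> z \<in> lprinc a" using cp idl unfolding completely_prime_def by blast
  then show False
  proof
    assume "c \<in> lprinc a"
    then obtain t where "c = t * a" unfolding lp_iff by blast
    then have "1 * c = (t * c') * c" using ac by (simp add: mult.assoc)
    then have "t * c' = 1" using c0 by (metis mult_cancel_right)
    then show False using nu left_inv_unit by blast
  next
    assume "z \<in> lprinc a"
    then obtain t where "s * b' = t * b * b'" unfolding lp_iff z_def using ab by (auto simp: mult.assoc)
    then have "s = t * b" using b'0 by (metis mult_cancel_right)
    then have "1 * s \<in> lprinc b" unfolding lp_iff by auto
    then have "1 \<in> lprinc c" using key by blast
    then show False using nu one_lp_unit by blast
  qed
qed


lemma rmul_pow:
  fixes a y :: "'a::ring_1"
  assumes ay: "a * y \<in> lprinc a" and t: "t \<in> lprinc a"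
  shows "t * y ^ n \<in> lprinc a"
proof (induction n)
  case 0 then show ?case using t by simp
next
  case (Suc n)
  then obtain s where "t * y ^ n = s * a" unfolding lp_iff by blast
  moreover have "t * y ^ Suc n = (t * y ^ n) * y" by (metis power_Suc2 mult.assoc)
  ultimately have "t * y ^ Suc n = s * (a * y)" by (simp add: mult.assoc)
  then show ?case using lp_mult[OF ay] by metis
qed

lemma no_surj:
  fixes a :: "'a::ring_1_no_zero_divisors"
  assumes pid: "is_PID TYPE('a)" and ay: "a * y \<in> lprinc a" and xy: "x * y \<in> lprinc a"
    and xa: "x \<notin> lprinc a" and py: "1 - p * y \<in> lprinc a"
  shows False
proof -
  define K where "K n = {r. r * y ^ n \<in> lprinc a}" for n
  have Kmono1: "K n \<subseteq> K (Suc n)" for n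
  proof
    fix r assume "r \<in> K n"
    then have "r * y ^ n * y ^ 1 \<in> lprinc a" using rmul_pow[OF ay] unfolding K_def by blast
    moreover have "r * y ^ n * y ^ 1 = r * y ^ Suc n" by (metis power_Suc2 mult.assoc power_one_right)
    ultimately show "r \<in> K (Suc n)" unfolding K_def by simp
  qed
  have Kmono: "m \<le> n \<Longrightarrow> K m \<subseteq> K n" for m n
    using lift_Suc_mono_le[of K, OF Kmono1] by simp
  define U where "U = (\<Union>n. K n)"
  have "left_ideal U"
    unfolding left_ideal_def
  proof (intro conjI ballI allI)
    show "0 \<in> U" unfolding U_def K_def using lp_zero by auto
  next
    fix u v assume "u \<in> U" "v \<in> U"
    then obtain m n where "u \<in> K m" "v \<in> K n" unfolding U_def by blast
    then have "u \<in> K (max m n)" "v \<in> K (max m n)" using Kmono[of m "max m n"] Kmono[of n "max m n"] by auto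
    then have "u + v \<in> K (max m n)" unfolding K_def using lp_add by (force simp: distrib_right)
    then show "u + v \<in> U" unfolding U_def by blast
  next
    fix u assume "u \<in> U"
    then obtain m where "u \<in> K m" unfolding U_def by blast
    then have "- u \<in> K m" unfolding K_def using lp_mult[of _ a "-1"] by force
    then show "- u \<in> U" unfolding U_def by blast
  next
    fix r u assume "u \<in> U"
    then obtain m where "u \<in> K m" unfolding U_def by blast
    then have "r * u \<in> K m" unfolding K_def using lp_mult[of _ a r] by (force simp: mult.assoc)
    then show "r * u \<in> U" unfolding U_def by blast
  qed
  then obtain g where Ug: "U = lprinc g" using pid unfolding is_PID_def by blast
  then have "g \<in> U" using lp_self by blast
  then obtain N where gN: "g \<in> K N" unfolding U_def by blast
  have UK: "U \<subseteq> K N"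
  proof
    fix r assume "r \<in> U"
    then obtain t where "r = t * g" using Ug lp_iff by blast
    then show "r \<in> K N" using gN lp_mult unfolding K_def by (force simp: mult.assoc)
  qed
  have surj: "\<forall>z. \<exists>w. z - w * y ^ n \<in> lprinc a" for n
  proof (induction n)
    case 0 show ?case
    proof
      fix z show "\<exists>w. z - w * y ^ 0 \<in> lprinc a" using lp_zero[of a] by (intro exI[of _ z]) simp
    qed
  next
    case (Suc n)
    show ?case
    proof
      fix z
      obtain w where w: "z - w * y ^ n \<in> lprinc a" using Suc by blast
      have "w * (1 - p * y) \<in> lprinc a" using lp_mult[OF py] by blast
      then have "w * (1 - p * y) * y ^ n \<in> lprinc a" using rmul_pow[OF ay] by blast
      moreover have "w * (1 - p * y) * y ^ n = w * y ^ n - (w * p) * y ^ Suc n"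
        by (simp add: right_diff_distrib left_diff_distrib mult.assoc)
      ultimately have "w * y ^ n - (w * p) * y ^ Suc n \<in> lprinc a" by simp
      then have "(z - w * y ^ n) + (w * y ^ n - (w * p) * y ^ Suc n) \<in> lprinc a"
        using w lp_add by blast
      then have "z - (w * p) * y ^ Suc n \<in> lprinc a" by simp
      then show "\<exists>w. z - w * y ^ Suc n \<in> lprinc a" by blast
    qed
  qed
  obtain w where w: "x - w * y ^ N \<in> lprinc a" using surj[of N] by blast
  then have "(x - w * y ^ N) * y ^ 1 \<in> lprinc a" using rmul_pow[OF ay] by blast
  moreover have "(x - w * y ^ N) * y ^ 1 = x * y - w * y ^ Suc N"
    by (simp add: left_diff_distrib mult.assoc power_commutes)
  ultimately have "x * y - w * y ^ Suc N \<in> lprinc a" by simp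
  then have "w * y ^ Suc N \<in> lprinc a" using lp_shift[of "x * y" "w * y ^ Suc N" a] xy by simp
  then have "w \<in> K (Suc N)" unfolding K_def by simp
  then have "w \<in> U" unfolding U_def by blast
  then have "w \<in> K N" using UK by (rule subsetD[rotated])
  then have "w * y ^ N \<in> lprinc a" unfolding K_def by simp
  then have "x \<in> lprinc a" using lp_shift[OF w] by simp
  then show False using xa by blast
qed


lemma dir2:
  fixes a :: "'a::ring_1_no_zero_divisors"
  assumes pid: "is_PID TYPE('a)" and a0: "a \<noteq> 0" and nua: "\<not> ring_unit a"
    and ci: "c_irreducible a"
  shows "completely_prime (lprinc a)"
  unfolding completely_prime_def
proof (intro conjI allI impI)
  show "lprinc a \<noteq> UNIV" using nua one_lp_unit by blast
next
  fix x y
  assume "x * y \<in> lprinc a \<and> (\<forall>t\<in>lprinc a. t * y \<in> lprinc a)"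
  then have xy: "x * y \<in> lprinc a" and ry: "\<And>t. t \<in> lprinc a \<Longrightarrow> t * y \<in> lprinc a" by auto
  have ay: "a * y \<in> lprinc a" using ry lp_self by blast
  show "x \<in> lprinc a \<or> y \<in> lprinc a"
  proof (rule ccontr)
    assume "\<not> (x \<in> lprinc a \<or> y \<in> lprinc a)"
    then have xa: "x \<notin> lprinc a" and ya: "y \<notin> lprinc a" by auto
    define K where "K = {r. r * y \<in> lprinc a}"
    have "left_ideal K" unfolding left_ideal_def K_def
    proof (intro conjI ballI allI; simp)
      show "0 \<in> lprinc a" by (rule lp_zero)
    next
      fix u v assume "u * y \<in> lprinc a" "v * y \<in> lprinc a"
      then show "(u + v) * y \<in> lprinc a" using lp_add by (simp add: distrib_right)
    next
      fix u assume "u * y \<in> lprinc a"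
      then show "- (u * y) \<in> lprinc a" using lp_mult[of _ a "-1"] by simp
    next
      fix r u assume "u * y \<in> lprinc a"
      then show "r * u * y \<in> lprinc a" using lp_mult[of _ a r] by (simp add: mult.assoc)
    qed
    then obtain c where Kc: "K = lprinc c" using pid unfolding is_PID_def by blast
    define J where "J = {r * y + q * a | r q. True}"
    have "left_ideal J" unfolding left_ideal_def J_def
    proof (intro conjI ballI allI)
      show "0 \<in> {r * y + q * a |r q. True}" by (rule CollectI, rule exI[of _ 0], rule exI[of _ 0]) simp
    next
      fix u v assume "u \<in> {r * y + q * a |r q. True}" "v \<in> {r * y + q * a |r q. True}"
      then obtain r1 q1 r2 q2 where "u = r1 * y + q1 * a" "v = r2 * y + q2 * a" by blast
      then have "u + v = (r1 + r2) * y + (q1 + q2) * a" by (simp add: distrib_right algebra_simps)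
      then show "u + v \<in> {r * y + q * a |r q. True}" by blast
    next
      fix u assume "u \<in> {r * y + q * a |r q. True}"
      then obtain r1 q1 where "u = r1 * y + q1 * a" by blast
      then have "- u = (- r1) * y + (- q1) * a" by simp
      then show "- u \<in> {r * y + q * a |r q. True}" by blast
    next
      fix t u assume "u \<in> {r * y + q * a |r q. True}"
      then obtain r1 q1 where "u = r1 * y + q1 * a" by blast
      then have "t * u = (t * r1) * y + (t * q1) * a" by (simp add: distrib_left mult.assoc)
      then show "t * u \<in> {r * y + q * a |r q. True}" by blast
    qed
    then obtain d where Jd: "J = lprinc d" using pid unfolding is_PID_def by blast
    have oneJ: "1 \<notin> J"
    proof
      assume "1 \<in> J"
      then obtain p q where "1 = p * y + q * a" unfolding J_def by blast
      then have "1 - p * y = q * a" by (simp add: algebra_simps)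
      then have "1 - p * y \<in> lprinc a" unfolding lp_iff by blast
      then show False using no_surj[OF pid ay xy xa] by blast
    qed
    have nud: "\<not> ring_unit d" using oneJ Jd unit_lp by blast
    have "a \<in> K" unfolding K_def using ay by simp
    then obtain c' where ac: "a = c' * c" using Kc lp_iff by blast
    have "a \<in> J" unfolding J_def by (rule CollectI, rule exI[of _ 0], rule exI[of _ 1]) simp
    then obtain b where ab: "a = b * d" using Jd lp_iff by blast
    have "y \<in> J" unfolding J_def by (rule CollectI, rule exI[of _ 1], rule exI[of _ 0]) simp
    then obtain u where yu: "y = u * d" using Jd lp_iff by blast
    have "d \<in> J" using Jd lp_self by blast
    then obtain v w where dvw: "d = v * y + w * a" unfolding J_def by blast
    have d0: "d \<noteq> 0" using ab a0 by auto
    have nuc: "\<not> ring_unit c"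
    proof
      assume "ring_unit c"
      then have "1 \<in> K" using Kc unit_lp by blast
      then show False using ya unfolding K_def by simp
    qed
    have nuc': "\<not> ring_unit c'"
    proof
      assume "ring_unit c'"
      then obtain e where "e * c' = 1" unfolding ring_unit_def by blast
      then have "c = e * a" using ac by (simp add: mult.assoc[symmetric])
      moreover have "x \<in> K" unfolding K_def using xy by simp
      then obtain t where "x = t * c" using Kc lp_iff by blast
      ultimately have "x = (t * e) * a" by (simp add: mult.assoc)
      then show False using xa unfolding lp_iff by blast
    qed
    have nub: "\<not> ring_unit b"
    proof
      assume "ring_unit b"
      then obtain e where "e * b = 1" unfolding ring_unit_def by blast
      then have "d = e * a" using ab by (simp add: mult.assoc[symmetric])
      then have "y = (u * e) * a" using yu by (simp add: mult.assoc)
      then show False using ya unfolding lp_iff by blast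
    qed
    have inK: "z \<in> lprinc c \<longleftrightarrow> z * y \<in> lprinc a" for z using Kc unfolding K_def by blast
    have sim: "similar b c" unfolding similar_def
    proof (intro exI[of _ "\<lambda>r. r * v"] conjI allI)
      fix r s show "(r + s) * v - (r * v + s * v) \<in> lprinc c" using lp_zero by (simp add: distrib_right)
    next
      fix r s show "(r * s) * v - r * (s * v) \<in> lprinc c" using lp_zero by (simp add: mult.assoc)
    next
      fix r
      have "r * d - r * v * y = (r * w) * a" using dvw by (simp add: distrib_left mult.assoc)
      then have "r * d - r * v * y \<in> lprinc a" unfolding lp_iff by blast
      then have e1: "r * d \<in> lprinc a \<longleftrightarrow> r * v * y \<in> lprinc a" by (rule lp_shift)
      have e2: "r * d \<in> lprinc a \<longleftrightarrow> r \<in> lprinc b"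
      proof
        assume "r * d \<in> lprinc a"
        then obtain s where "r * d = s * a" unfolding lp_iff by blast
        then have "r * d = (s * b) * d" using ab by (simp add: mult.assoc)
        then have "r = s * b" using d0 by simp
        then show "r \<in> lprinc b" unfolding lp_iff by blast
      next
        assume "r \<in> lprinc b"
        then obtain s where "r = s * b" unfolding lp_iff by blast
        then have "r * d = s * a" using ab by (simp add: mult.assoc)
        then show "r * d \<in> lprinc a" unfolding lp_iff by blast
      qed
      show "r * v \<in> lprinc c \<longleftrightarrow> r \<in> lprinc b" using inK e1 e2 by blast
    next
      fix z
      have "(z * u * v - z) * y = z * u * (v * y) - z * (u * d)" using yu
        by (simp add: left_diff_distrib mult.assoc)
      also have "\<dots> = z * u * (d - w * a) - z * u * d" using dvw by (simp add: mult.assoc)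
      also have "\<dots> = (- (z * u * w)) * a" by (simp add: right_diff_distrib mult.assoc)
      finally have "(z * u * v - z) * y \<in> lprinc a" unfolding lp_iff by blast
      then have "z * u * v - z \<in> lprinc c" using inK by blast
      then show "\<exists>t. t * v - z \<in> lprinc c" by blast
    qed
    have "c_reducible a" unfolding c_reducible_def
      using a0 nub nud nuc' nuc ab ac sim by blast
    then show False using ci unfolding c_irreducible_def by blast
  qed
qed

theorem proposition3p5:
  fixes a :: "'a::ring_1_no_zero_divisors"
  assumes "is_PID TYPE('a)"
    and "a \<noteq> 0"
    and "\<not> ring_unit a"
  shows "completely_prime (lprinc a) \<longleftrightarrow> c_irreducible a"
  using dir1[OF assms(2)] dir2[OF assms] by blast

end
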